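(* Let $\mathcal{A} \colon \mathbb{R}^n \to \mathbb{R}^m$ be a linear map with operator norm $\|\mathcal{A}\|$ (with respect to the Euclidean norms). Let $(\mathcal{D}_\theta)_{\theta \in \Theta}$ be a family of maps $\mathcal{D}_\theta \colon \mathbb{R}^n \to \mathbb{R}^n$, each of which is a contraction (Lipschitz with constant strictly less than $1$ in the Euclidean norm). Let $\Omega \colon \mathbb{R}^n \to \mathbb{R}^n$ be nonexpansive (Lipschitz with constant at most $1$). Let $s \in (0, 1/\|\mathcal{A}\|^2)$ and $\lambda \in (0,1)$. Define, for $\mathbf{x}, \mathbf{v} \in \mathbb{R}^n$ and $\mathbf{y} \in \mathbb{R}^m$, $$\mathcal{G}(\mathbf{x},\mathbf{y}) = \mathbf{x} - 2s\,\mathcal{A}^\top(\mathcal{A}\mathbf{x} - \mathbf{y}), \qquad \mathcal{N}_\theta(\mathbf{v}) = \Omega\bigl(\lambda\,\mathcal{D}_\theta(\mathbf{v}) + (1-\lambda)\,\mathbf{v}\bigr).$$ Then for every $\mathbf{y} \in \mathbb{R}^m$ and every $\theta \in \Theta$, the map $\mathbf{x} \mapsto \mathcal{N}_\theta(\mathcal{G}(\mathbf{x},\mathbf{y}))$ from $\mathbb{R}^n$ to $\mathbb{R}^n$ is a contraction and hence has exactly one fixed point $\mathbf{x}^\ast \in \mathbb{R}^n$. In particular, the map $\mathcal{B}_\theta \colon \mathbb{R}^m \to \mathbb{R}^n$, $\mathbf{y} \mapsto \mathbf{x}^\ast$, where $\mathbf{x}^\ast$ is the unique solution of $\mathbf{x}^\ast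 = \mathcal{N}_\theta(\mathcal{G}(\mathbf{x}^\ast,\mathbf{y}))$, is well defined.
   Context: $\mathcal{A}^\top$ denotes the transpose (adjoint) of $\mathcal{A}$. All norms on $\mathbb{R}^n$ and $\mathbb{R}^m$ are Euclidean, and $\|\mathcal{A}\|$ is the corresponding operator norm. *)

theory Defs
  imports "HOL-Analysis.Analysis"
begin

definition is_contraction :: "('a::metric_space \<Rightarrow> 'a) \<Rightarrow> bool" where
  "is_contraction f \<longleftrightarrow> (\<exists>L<1. L-lipschitz_on UNIV f)"

definition nonexpansive :: "('a::metric_space \<Rightarrow> 'a) \<Rightarrow> bool" where
  "nonexpansive f \<longleftrightarrow> 1-lipschitz_on UNIV f"

end

theory Submission
  imports Defs
begin

lemma grad_step_nonexp:
  fixes A :: "real ^ 'n \<Rightarrow> real ^ 'm" and s :: real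
  assumes linA: "linear A" and s_pos: "0 < s" and s_bound: "s * (onorm A)\<^sup>2 < 1"
  shows "norm (x - (2 * s) *\<^sub>R adjoint A (A x)) \<le> norm x"
proof -
  let ?z = "adjoint A (A x)"
  have bl: "bounded_linear A" using linA by (simp add: linear_conv_bounded_linear)
  have on0: "0 \<le> onorm A" using onorm_pos_le[OF bl] .
  have e1: "?z \<bullet> ?z = A ?z \<bullet> A x" using adjoint_works[OF linA] by simp
  have "A ?z \<bullet> A x \<le> norm (A ?z) * norm (A x)" by (rule norm_cauchy_schwarz)
  also have "\<dots> \<le> onorm A * norm ?z * norm (A x)"
    by (intro mult_right_mono onorm[OF bl]) simp
  finally have "norm ?z * norm ?z \<le> onorm A * norm ?z * norm (A x)"
    using e1 power2_norm_eq_inner[of ?z] by (simp add: power2_eq_square)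
  hence zb: "norm ?z \<le> onorm A * norm (A x)"
    by (cases "norm ?z = 0") (auto simp: mult.commute on0)
  have xz: "x \<bullet> ?z = A x \<bullet> A x" using adjoint_works[OF linA] by simp
  have "(norm (x - (2 * s) *\<^sub>R ?z))\<^sup>2 = (x - (2 * s) *\<^sub>R ?z) \<bullet> (x - (2 * s) *\<^sub>R ?z)"
    by (rule power2_norm_eq_inner)
  also have "\<dots> = x \<bullet> x - 4 * s * (x \<bullet> ?z) + 4 * s\<^sup>2 * (?z \<bullet> ?z)"
    by (simp add: inner_diff_left inner_diff_right inner_commute algebra_simps power2_eq_square)
  also have "\<dots> = (norm x)\<^sup>2 - 4 * s * (norm (A x))\<^sup>2 + 4 * s\<^sup>2 * (norm ?z)\<^sup>2"
    by (simp only: xz dot_square_norm)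
  also have "4 * s\<^sup>2 * (norm ?z)\<^sup>2 \<le> 4 * s\<^sup>2 * ((onorm A)\<^sup>2 * (norm (A x))\<^sup>2)"
  proof -
    have "(norm ?z)\<^sup>2 \<le> (onorm A * norm (A x))\<^sup>2" using zb by (intro power_mono) auto
    hence "(norm ?z)\<^sup>2 \<le> (onorm A)\<^sup>2 * (norm (A x))\<^sup>2" by (simp add: power_mult_distrib)
    thus ?thesis by (intro mult_left_mono) auto
  qed
  also have "4 * s\<^sup>2 * ((onorm A)\<^sup>2 * (norm (A x))\<^sup>2) = 4 * s * (norm (A x))\<^sup>2 * (s * (onorm A)\<^sup>2)"
    by (simp add: power2_eq_square)
  also have "\<dots> \<le> 4 * s * (norm (A x))\<^sup>2"
    using s_bound s_pos by (intro mult_left_le) auto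
  finally have "(norm (x - (2 * s) *\<^sub>R ?z))\<^sup>2 \<le> (norm x)\<^sup>2" by simp
  thus ?thesis by (simp add: power2_le_iff_abs_le)
qed

theorem mainTheorem1:
  fixes A :: "real ^ 'n \<Rightarrow> real ^ 'm"
    and D :: "'t \<Rightarrow> real ^ 'n \<Rightarrow> real ^ 'n"
    and \<Theta> :: "'t set"
    and \<Omega> :: "real ^ 'n \<Rightarrow> real ^ 'n"
    and s lam :: real
  assumes linA: "linear A"
    and contr: "\<forall>\<theta>\<in>\<Theta>. is_contraction (D \<theta>)"
    and nonexp: "nonexpansive \<Omega>"
    and s_pos: "0 < s" and s_bound: "s * (onorm A)\<^sup>2 < 1"
    and lam: "0 < lam" "lam < 1"
  defines "G \<equiv> (\<lambda>x y. x - (2 * s) *\<^sub>R adjoint A (A x - y))"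
    and "N \<equiv> (\<lambda>\<theta> v. \<Omega> (lam *\<^sub>R D \<theta> v + (1 - lam) *\<^sub>R v))"
  shows "\<forall>y. \<forall>\<theta>\<in>\<Theta>. is_contraction (\<lambda>x. N \<theta> (G x y)) \<and> (\<exists>!x. x = N \<theta> (G x y))"
proof (intro allI ballI)
  fix y \<theta> assume th: "\<theta> \<in> \<Theta>"
  obtain L where L1: "L < 1" and LL: "L-lipschitz_on UNIV (D \<theta>)"
    using contr th by (auto simp: is_contraction_def)
  have L0: "0 \<le> L" using lipschitz_on_nonneg[OF LL] .
  have Dl: "dist (D \<theta> a) (D \<theta> b) \<le> L * dist a b" for a b
    using lipschitz_onD[OF LL] by auto
  have Om: "dist (\<Omega> a) (\<Omega> b) \<le> dist a b" for a b
    using nonexp lipschitz_onD[of 1 UNIV \<Omega>] by (auto simp: nonexpansive_def)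
  have linAd: "linear (adjoint A)" using adjoint_linear[OF linA] .
  have Gd: "G a y - G b y = (a - b) - (2 * s) *\<^sub>R adjoint A (A (a - b))" for a b
  proof -
    have "adjoint A (A a - y) - adjoint A (A b - y) = adjoint A (A (a - b))"
      by (simp add: linear_diff[OF linAd, symmetric] linear_diff[OF linA])
    hence h: "(2 * s) *\<^sub>R adjoint A (A a - y) - (2 * s) *\<^sub>R adjoint A (A b - y) = (2 * s) *\<^sub>R adjoint A (A (a - b))"
      by (simp only: scaleR_diff_right[symmetric])
    have "G a y - G b y = (a - b) - ((2 * s) *\<^sub>R adjoint A (A a - y) - (2 * s) *\<^sub>R adjoint A (A b - y))"
      unfolding G_def by (simp only: diff_diff_eq2 diff_diff_eq diff_add_eq add_diff_eq ac_simps)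
    thus ?thesis by (simp only: h)
  qed
  have Gl: "dist (G a y) (G b y) \<le> dist a b" for a b
    unfolding dist_norm Gd using grad_step_nonexp[OF linA s_pos s_bound] .
  define K where "K = lam * L + (1 - lam)"
  have K0: "0 \<le> K" unfolding K_def using lam L0 by simp
  have "lam * L < lam * 1" using lam L1 by (intro mult_strict_left_mono) auto
  hence K1: "K < 1" unfolding K_def by simp
  have Ml: "dist (lam *\<^sub>R D \<theta> a + (1 - lam) *\<^sub>R a) (lam *\<^sub>R D \<theta> b + (1 - lam) *\<^sub>R b) \<le> K * dist a b" for a b
  proof -
    have "dist (lam *\<^sub>R D \<theta> a + (1 - lam) *\<^sub>R a) (lam *\<^sub>R D \<theta> b + (1 - lam) *\<^sub>R b)
        = norm (lam *\<^sub>R (D \<theta> a - D \<theta> b) + (1 - lam) *\<^sub>R (a - b))"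
      by (simp add: dist_norm algebra_simps)
    also have "\<dots> \<le> lam * dist (D \<theta> a) (D \<theta> b) + (1 - lam) * dist a b"
      using lam by (intro order_trans[OF norm_triangle_ineq]) (simp add: dist_norm)
    also have "\<dots> \<le> lam * (L * dist a b) + (1 - lam) * dist a b"
      using lam Dl[of a b] by (intro add_right_mono mult_left_mono) auto
    finally show ?thesis by (simp add: K_def algebra_simps)
  qed
  have Fl: "dist (N \<theta> (G a y)) (N \<theta> (G b y)) \<le> K * dist a b" for a b
  proof -
    have "dist (N \<theta> (G a y)) (N \<theta> (G b y)) \<le> K * dist (G a y) (G b y)"
      unfolding N_def by (rule order_trans[OF Om Ml])
    also have "\<dots> \<le> K * dist a b" using Gl K0 by (intro mult_left_mono) auto
    finally show ?thesis .
  qed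
  have "is_contraction (\<lambda>x. N \<theta> (G x y))"
    unfolding is_contraction_def using K0 K1 Fl by (intro exI[of _ K]) (auto intro: lipschitz_onI)
  moreover have "\<exists>!x. N \<theta> (G x y) = x"
    by (rule banach_fix_type[OF K0 K1]) (use Fl in auto)
  ultimately show "is_contraction (\<lambda>x. N \<theta> (G x y)) \<and> (\<exists>!x. x = N \<theta> (G x y))"
    by (metis (no_types, lifting))
qed

end
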